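(* Let $R$ be a (not necessarily commutative) local ring with maximal ideal $\mathfrak{m}$, separated and complete for the $\mathfrak{m}$-adic topology, $\sigma:R\to R$ a ring automorphism with $\sigma(\mathfrak{m})=\mathfrak{m}$, and $\delta$ a $\sigma$-derivation with $\delta(R)\subseteq\mathfrak{m}$, $\delta(\mathfrak{m})\subseteq\mathfrak{m}^2$. Let $A=R[[X;\sigma,\delta]]$ and let $f\in A$ have finite reduced order. Then $f$ can be expressed uniquely as $f=\epsilon F$ with $\epsilon$ a unit of $A$ and $F$ a distinguished polynomial.
   Context: A $\sigma$-derivation is an additive map with $\delta(rs)=\delta(r)s+\sigma(r)\delta(s)$. $R[[X;\sigma,\delta]]$ consists of formal series $\sum r_nX^n$ with multiplication determined by $Xr=\sigma(r)X+\delta(r)$; it contains the skew polynomial ring $R[X;\sigma,\delta]$. For $f=\sum a_iX^i$, $\mathrm{ord}^{red}(f)=\min\{i:a_i\in R^\times\}$. A distinguished (Weierstrass) polynomial is a monic polynomial $X^s+a_{s-1}X^{s-1}+\dots+a_1X+a_0\in R[X;\sigma,\delta]$ with all $a_i\in\mathfrak{m}$. *)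

theory Defs
  imports Main
begin

text \<open>The ring R is the whole type 'a (class ring_1, not necessarily commutative).
Skew power series sum r_n X^n are represented by their coefficient sequences nat => 'a.\<close>

definition unit_r :: "'a::ring_1 \<Rightarrow> bool" where
  "unit_r x \<longleftrightarrow> (\<exists>y. x * y = 1 \<and> y * x = 1)"

definition mid :: "'a::ring_1 set" where
  "mid = {x. \<not> unit_r x}"

text \<open>Local ring: 1 \<noteq> 0 and the non-units form a two-sided ideal (then it is the unique maximal ideal).\<close>
definition local_ring :: "'a::ring_1 itself \<Rightarrow> bool" where
  "local_ring _ \<longleftrightarrow> (0::'a) \<noteq> 1 \<and>
     (\<forall>x\<in>(mid::'a set). \<forall>y\<in>mid. x + y \<in> mid) \<and>
     (\<forall>x\<in>(mid::'a set). \<forall>r. r * x \<in> mid \<and> x * r \<in> mid)"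

inductive in_mpow :: "nat \<Rightarrow> 'a::ring_1 \<Rightarrow> bool" where
  mpow_0: "in_mpow 0 x"
| mpow_prod: "a \<in> mid \<Longrightarrow> in_mpow k b \<Longrightarrow> in_mpow (Suc k) (a * b)"
| mpow_zero: "in_mpow (Suc k) 0"
| mpow_add: "in_mpow (Suc k) x \<Longrightarrow> in_mpow (Suc k) y \<Longrightarrow> in_mpow (Suc k) (x + y)"

definition mpow :: "nat \<Rightarrow> 'a::ring_1 set" where
  "mpow k = {x. in_mpow k x}"

definition madic_lim :: "(nat \<Rightarrow> 'a::ring_1) \<Rightarrow> 'a \<Rightarrow> bool" where
  "madic_lim s L \<longleftrightarrow> (\<forall>k. \<exists>N. \<forall>n\<ge>N. s n - L \<in> mpow k)"

definition madic_cauchy :: "(nat \<Rightarrow> 'a::ring_1) \<Rightarrow> bool" where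
  "madic_cauchy s \<longleftrightarrow> (\<forall>k. \<exists>N. \<forall>n\<ge>N. \<forall>n'\<ge>N. s n - s n' \<in> mpow k)"

definition madic_separated :: "'a::ring_1 itself \<Rightarrow> bool" where
  "madic_separated _ \<longleftrightarrow> (\<Inter>k. mpow k) = {0::'a}"

definition madic_complete :: "'a::ring_1 itself \<Rightarrow> bool" where
  "madic_complete _ \<longleftrightarrow> (\<forall>s::nat \<Rightarrow> 'a. madic_cauchy s \<longrightarrow> (\<exists>L. madic_lim s L))"

text \<open>m-adically convergent infinite sum (meaningful when the limit exists; unique by separatedness).\<close>
definition msum :: "(nat \<Rightarrow> 'a::ring_1) \<Rightarrow> 'a" where
  "msum a = (THE S. madic_lim (\<lambda>N. \<Sum>i<N. a i) S)"

definition ring_automorphism :: "('a::ring_1 \<Rightarrow> 'a) \<Rightarrow> bool" where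
  "ring_automorphism \<sigma> \<longleftrightarrow> bij \<sigma> \<and> \<sigma> 1 = 1 \<and>
     (\<forall>x y. \<sigma> (x + y) = \<sigma> x + \<sigma> y) \<and> (\<forall>x y. \<sigma> (x * y) = \<sigma> x * \<sigma> y)"

definition sigma_derivation :: "('a::ring_1 \<Rightarrow> 'a) \<Rightarrow> ('a \<Rightarrow> 'a) \<Rightarrow> bool" where
  "sigma_derivation \<sigma> \<delta> \<longleftrightarrow> (\<forall>x y. \<delta> (x + y) = \<delta> x + \<delta> y) \<and>
     (\<forall>r s. \<delta> (r * s) = \<delta> r * s + \<sigma> r * \<delta> s)"

text \<open>xc s d i k r = coefficient of X^k in X^i r, computed from X r = s(r) X + d(r):
  X^(i+1) r = X (sum_k c_(i,k) X^k) = sum_k (s(c_(i,k)) X^(k+1) + d(c_(i,k)) X^k).\<close>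
fun xc :: "('a::ring_1 \<Rightarrow> 'a) \<Rightarrow> ('a \<Rightarrow> 'a) \<Rightarrow> nat \<Rightarrow> nat \<Rightarrow> 'a \<Rightarrow> 'a" where
  "xc \<sigma> \<delta> 0 k r = (if k = 0 then r else 0)"
| "xc \<sigma> \<delta> (Suc i) k r =
     (case k of 0 \<Rightarrow> 0 | Suc k' \<Rightarrow> \<sigma> (xc \<sigma> \<delta> i k' r)) + \<delta> (xc \<sigma> \<delta> i k r)"

text \<open>Multiplication in R[[X; s, d]]: (sum f_i X^i)(sum g_j X^j) has coefficient of X^n
  equal to sum_(j<=n) sum_i f_i c_(i,n-j)(g_j), the inner sum m-adically convergent.\<close>
definition skew_mult :: "('a::ring_1 \<Rightarrow> 'a) \<Rightarrow> ('a \<Rightarrow> 'a) \<Rightarrow> (nat \<Rightarrow> 'a) \<Rightarrow> (nat \<Rightarrow> 'a) \<Rightarrow> (nat \<Rightarrow> 'a)" where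
  "skew_mult \<sigma> \<delta> f g = (\<lambda>n. \<Sum>j\<le>n. msum (\<lambda>i. f i * xc \<sigma> \<delta> i (n - j) (g j)))"

definition skew_one :: "nat \<Rightarrow> 'a::ring_1" where
  "skew_one = (\<lambda>n. if n = 0 then 1 else 0)"

definition skew_unit :: "('a::ring_1 \<Rightarrow> 'a) \<Rightarrow> ('a \<Rightarrow> 'a) \<Rightarrow> (nat \<Rightarrow> 'a) \<Rightarrow> bool" where
  "skew_unit \<sigma> \<delta> e \<longleftrightarrow> (\<exists>g. skew_mult \<sigma> \<delta> e g = skew_one \<and> skew_mult \<sigma> \<delta> g e = skew_one)"

definition finite_red_ord :: "(nat \<Rightarrow> 'a::ring_1) \<Rightarrow> bool" where
  "finite_red_ord f \<longleftrightarrow> (\<exists>i. unit_r (f i))"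

definition distinguished :: "(nat \<Rightarrow> 'a::ring_1) \<Rightarrow> bool" where
  "distinguished F \<longleftrightarrow> (\<exists>s. F s = 1 \<and> (\<forall>i>s. F i = 0) \<and> (\<forall>i<s. F i \<in> mid))"

end

theory Submission
  imports Defs
begin

locale wp =
  fixes \<sigma> \<delta> :: "'a::ring_1 \<Rightarrow> 'a"
  assumes loc: "local_ring TYPE('a)"
    and sep: "madic_separated TYPE('a)"
    and cmp: "madic_complete TYPE('a)"
    and aut: "ring_automorphism \<sigma>"
    and smid: "\<sigma> ` mid = mid"
    and sder: "sigma_derivation \<sigma> \<delta>"
    and dR: "range \<delta> \<subseteq> mid"
    and dm: "\<delta> ` mid \<subseteq> mpow 2"
begin

lemma one_ne_zero': "(0::'a) \<noteq> 1" using loc unfolding local_ring_def by auto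
lemma mid_add: "x \<in> mid \<Longrightarrow> y \<in> mid \<Longrightarrow> x + y \<in> (mid::'a set)"
  using loc unfolding local_ring_def by auto
lemma mid_ml: "x \<in> mid \<Longrightarrow> r * x \<in> (mid::'a set)"
  using loc unfolding local_ring_def by auto
lemma mid_mr: "x \<in> mid \<Longrightarrow> x * r \<in> (mid::'a set)"
  using loc unfolding local_ring_def by auto
lemma mid_zero: "(0::'a) \<in> mid"
  using one_ne_zero' unfolding mid_def unit_r_def by auto
lemma mid_uminus: "x \<in> mid \<Longrightarrow> - x \<in> (mid::'a set)"
  using mid_ml[of x "-1"] by simp
lemma mid_diff: "x \<in> mid \<Longrightarrow> y \<in> mid \<Longrightarrow> x - y \<in> (mid::'a set)"
  using mid_add[of x "-y"] mid_uminus by simp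
lemma not_unit_mid: "\<not> unit_r x \<Longrightarrow> x \<in> (mid::'a set)" unfolding mid_def by auto
lemma unit_not_mid: "unit_r x \<Longrightarrow> x \<notin> (mid::'a set)" unfolding mid_def by auto
lemma unit_one: "unit_r (1::'a)" unfolding unit_r_def by auto
lemma unit_mult: "unit_r (x::'a) \<Longrightarrow> unit_r y \<Longrightarrow> unit_r (x * y)"
  unfolding unit_r_def
proof (elim exE conjE)
  fix a b assume h: "x * a = 1" "a * x = 1" "y * b = 1" "b * y = 1"
  have "x * y * (b * a) = 1" using h by (simp add: mult.assoc[symmetric]) (metis h(1) mult.assoc mult_1_right)
  moreover have "(b * a) * (x * y) = 1" using h by (metis mult.assoc mult_1_left)
  ultimately show "\<exists>z. x * y * z = 1 \<and> z * (x * y) = 1" by blast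
qed
lemma unit_add_mid: "unit_r (u::'a) \<Longrightarrow> x \<in> mid \<Longrightarrow> unit_r (u + x)"
proof (rule ccontr)
  assume "unit_r u" "x \<in> mid" "\<not> unit_r (u + x)"
  then have "u + x \<in> mid" using not_unit_mid by blast
  then have "(u + x) + - x \<in> mid" using mid_add mid_uminus \<open>x \<in> mid\<close> by blast
  then show False using \<open>unit_r u\<close> unit_not_mid by simp
qed
lemma unit_two_sided: "unit_r ((x::'a) * y) \<Longrightarrow> unit_r (y * x) \<Longrightarrow> unit_r x"
  unfolding unit_r_def
proof (elim exE conjE)
  fix a b assume h: "x * y * a = 1" "a * (x * y) = 1" "y * x * b = 1" "b * (y * x) = 1"
  define r where "r = y * a"
  define l where "l = b * y"
  have xr: "x * r = 1" using h unfolding r_def by (simp add: mult.assoc)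
  have lx: "l * x = 1" using h unfolding l_def by (simp add: mult.assoc)
  have "l = r" by (metis xr lx mult.assoc mult_1_left mult_1_right)
  then show "\<exists>z. x * z = 1 \<and> z * x = 1" using xr lx by blast
qed

lemma s_add: "\<sigma> (x + y) = \<sigma> x + \<sigma> y" using aut unfolding ring_automorphism_def by auto
lemma s_mult: "\<sigma> (x * y) = \<sigma> x * \<sigma> y" using aut unfolding ring_automorphism_def by auto
lemma s_one: "\<sigma> 1 = 1" using aut unfolding ring_automorphism_def by auto
lemma s_zero: "\<sigma> 0 = 0" using s_add[of 0 0] by simp
lemma s_uminus: "\<sigma> (- x) = - \<sigma> x" using s_add[of x "-x"] s_zero by (metis minus_unique add.right_inverse)
lemma s_diff: "\<sigma> (x - y) = \<sigma> x - \<sigma> y" using s_add[of x "-y"] s_uminus by simp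
lemma s_sum: "\<sigma> (sum g A) = (\<Sum>a\<in>A. \<sigma> (g a))"
  by (induction A rule: infinite_finite_induct) (auto simp: s_zero s_add)
lemma d_add: "\<delta> (x + y) = \<delta> x + \<delta> y" using sder unfolding sigma_derivation_def by auto
lemma d_mult: "\<delta> (x * y) = \<delta> x * y + \<sigma> x * \<delta> y" using sder unfolding sigma_derivation_def by auto
lemma d_zero: "\<delta> 0 = 0" using d_add[of 0 0] by simp
lemma d_uminus: "\<delta> (- x) = - \<delta> x" using d_add[of x "-x"] d_zero by (metis minus_unique add.right_inverse)
lemma d_diff: "\<delta> (x - y) = \<delta> x - \<delta> y" using d_add[of x "-y"] d_uminus by simp
lemma d_one: "\<delta> 1 = 0" using d_mult[of 1 1] s_one by simp
lemma d_sum: "\<delta> (sum g A) = (\<Sum>a\<in>A. \<delta> (g a))"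
  by (induction A rule: infinite_finite_induct) (auto simp: d_zero d_add)

lemma mp0[simp]: "x \<in> mpow 0" unfolding mpow_def by (auto intro: in_mpow.intros)
lemma mp_zero[simp]: "0 \<in> mpow k" unfolding mpow_def by (cases k) (auto intro: in_mpow.intros)
lemma mp_add: "(x::'a) \<in> mpow k \<Longrightarrow> y \<in> mpow k \<Longrightarrow> x + y \<in> mpow k"
  unfolding mpow_def by (cases k) (auto intro: in_mpow.intros)
lemma mp_ml: "(x::'a) \<in> mpow k \<Longrightarrow> r * x \<in> mpow k"
proof -
  have "in_mpow k (x::'a) \<Longrightarrow> in_mpow k (r * x)" for r
  proof (induction k x arbitrary: r rule: in_mpow.induct)
    case (mpow_prod a k b) then show ?case
      using in_mpow.mpow_prod[OF mid_ml[OF mpow_prod(1), of r] mpow_prod(2)] by (simp add: mult.assoc)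
  qed (auto intro: in_mpow.intros simp: distrib_left)
  then show "x \<in> mpow k \<Longrightarrow> r * x \<in> mpow k" unfolding mpow_def by auto
qed
lemma mp_mr: "(x::'a) \<in> mpow k \<Longrightarrow> x * r \<in> mpow k"
proof -
  have "in_mpow k (x::'a) \<Longrightarrow> in_mpow k (x * r)" for r
  proof (induction k x arbitrary: r rule: in_mpow.induct)
    case (mpow_prod a k b) then show ?case
      using in_mpow.mpow_prod[OF mpow_prod(1) mpow_prod(3)[of r]] by (simp add: mult.assoc)
  qed (auto intro: in_mpow.intros simp: distrib_right)
  then show "x \<in> mpow k \<Longrightarrow> x * r \<in> mpow k" unfolding mpow_def by auto
qed
lemma mp_uminus: "(x::'a) \<in> mpow k \<Longrightarrow> - x \<in> mpow k" using mp_ml[of x k "-1"] by simp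
lemma mp_diff: "(x::'a) \<in> mpow k \<Longrightarrow> y \<in> mpow k \<Longrightarrow> x - y \<in> mpow k"
  by (metis diff_conv_add_uminus mp_add mp_uminus)
lemma mp_sum: "(\<And>a. a \<in> A \<Longrightarrow> (g a::'a) \<in> mpow k) \<Longrightarrow> sum g A \<in> mpow k"
  by (induction A rule: infinite_finite_induct) (auto intro: mp_add)
lemma mp_mult: "(x::'a) \<in> mpow a \<Longrightarrow> y \<in> mpow b \<Longrightarrow> x * y \<in> mpow (a + b)"
proof -
  have "in_mpow a (x::'a) \<Longrightarrow> y \<in> mpow b \<Longrightarrow> x * y \<in> mpow (a + b)"
  proof (induction a x rule: in_mpow.induct)
    case (mpow_0 x) then show ?case by (simp add: mp_ml)
  next
    case (mpow_prod a k b')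
    then have "b' * y \<in> mpow (k + b)" by simp
    then show ?case using in_mpow.mpow_prod[OF mpow_prod(1)] unfolding mpow_def
      by (simp add: mult.assoc)
  next
    case (mpow_zero k) then show ?case by simp
  next
    case (mpow_add k x y') then show ?case using mp_add[of "x*y" "Suc k + b" "y'*y"]
      by (simp add: distrib_right)
  qed
  then show "x \<in> mpow a \<Longrightarrow> y \<in> mpow b \<Longrightarrow> x * y \<in> mpow (a + b)" unfolding mpow_def by auto
qed
lemma mp_mono: "(x::'a) \<in> mpow n \<Longrightarrow> m \<le> n \<Longrightarrow> x \<in> mpow m"
proof -
  have "in_mpow n (x::'a) \<Longrightarrow> m \<le> n \<Longrightarrow> in_mpow m x" for m
  proof (induction n x arbitrary: m rule: in_mpow.induct)
    case (mpow_prod a k b) then show ?case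
      by (cases m) (auto intro: in_mpow.intros)
  next
    case (mpow_zero k) then show ?case by (cases m) (auto intro: in_mpow.intros)
  next
    case (mpow_add k x y) then show ?case by (cases m) (auto intro: in_mpow.intros)
  qed (auto intro: in_mpow.intros)
  then show "x \<in> mpow n \<Longrightarrow> m \<le> n \<Longrightarrow> x \<in> mpow m" unfolding mpow_def by auto
qed
lemma mid_mp1: "(mid::'a set) = mpow 1"
proof
  show "(mid::'a set) \<subseteq> mpow 1"
  proof
    fix x :: 'a assume "x \<in> mid"
    then have "in_mpow (Suc 0) (x * 1)" by (intro in_mpow.intros) auto
    then show "x \<in> mpow 1" unfolding mpow_def by simp
  qed
  have "in_mpow n x \<Longrightarrow> n \<ge> 1 \<Longrightarrow> x \<in> mid" for n and x :: 'a
    by (induction n x rule: in_mpow.induct) (auto simp: mid_mr mid_zero mid_add)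
  then show "mpow 1 \<subseteq> (mid::'a set)" unfolding mpow_def by auto
qed
lemma mp_s: "(x::'a) \<in> mpow k \<Longrightarrow> \<sigma> x \<in> mpow k"
proof -
  have "in_mpow k (x::'a) \<Longrightarrow> in_mpow k (\<sigma> x)"
  proof (induction k x rule: in_mpow.induct)
    case (mpow_prod a k b)
    have "\<sigma> a \<in> mid" using smid mpow_prod(1) by auto
    then show ?case using in_mpow.mpow_prod[OF _ mpow_prod(3)] by (simp add: s_mult)
  qed (auto intro: in_mpow.intros simp: s_zero s_add)
  then show "x \<in> mpow k \<Longrightarrow> \<sigma> x \<in> mpow k" unfolding mpow_def by auto
qed
lemma mp_d: "(x::'a) \<in> mpow k \<Longrightarrow> \<delta> x \<in> mpow (Suc k)"
proof -
  have "in_mpow k (x::'a) \<Longrightarrow> \<delta> x \<in> mpow (Suc k)"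
  proof (induction k x rule: in_mpow.induct)
    case (mpow_0 x) then show ?case using dR mid_mp1 by auto
  next
    case (mpow_prod a k b)
    have "\<delta> a \<in> mpow 2" using dm mpow_prod(1) by auto
    then have 1: "\<delta> a * b \<in> mpow (Suc (Suc k))" using mp_mult[of "\<delta> a" 2 b k] mpow_prod(2)
      unfolding mpow_def by simp
    have "\<sigma> a \<in> mid" using smid mpow_prod(1) by auto
    then have 2: "\<sigma> a * \<delta> b \<in> mpow (Suc (Suc k))" using mpow_prod(3) unfolding mpow_def
      by (auto intro: in_mpow.intros)
    show ?case using mp_add[OF 1 2] by (simp add: d_mult)
  next
    case (mpow_zero k) then show ?case by (simp add: d_zero)
  next
    case (mpow_add k x y) then show ?case by (simp add: d_add mp_add)
  qed
  then show "x \<in> mpow k \<Longrightarrow> \<delta> x \<in> mpow (Suc k)" unfolding mpow_def by auto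
qed
lemma mp_all_zero: "(\<And>k. (x::'a) \<in> mpow k) \<Longrightarrow> x = 0"
  using sep unfolding madic_separated_def by blast

end

definition mnull :: "(nat \<Rightarrow> 'a::ring_1) \<Rightarrow> bool" where
  "mnull a \<longleftrightarrow> (\<forall>k. \<exists>N. \<forall>i\<ge>N. a i \<in> mpow k)"

definition closeD :: "(nat \<Rightarrow> nat) \<Rightarrow> nat \<Rightarrow> (nat \<Rightarrow> 'a::ring_1) \<Rightarrow> (nat \<Rightarrow> 'a) \<Rightarrow> bool" where
  "closeD d k Z Z' \<longleftrightarrow> (\<forall>n. Z n - Z' n \<in> mpow (k - d n))"

context wp
begin

lemma lim_unique: "madic_lim s (L::'a) \<Longrightarrow> madic_lim s L' \<Longrightarrow> L = L'"
proof -
  assume a: "madic_lim s L" "madic_lim s L'"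
  have "L' - L \<in> mpow k" for k
  proof -
    obtain N1 where N1: "\<forall>n\<ge>N1. s n - L \<in> mpow k" using a(1) unfolding madic_lim_def by blast
    obtain N2 where N2: "\<forall>n\<ge>N2. s n - L' \<in> mpow k" using a(2) unfolding madic_lim_def by blast
    have "(s (max N1 N2) - L) - (s (max N1 N2) - L') \<in> mpow k"
      using mp_diff[of "s (max N1 N2) - L" k "s (max N1 N2) - L'"] N1 N2 by simp
    then show ?thesis by simp
  qed
  then have "L' - L = 0" by (rule mp_all_zero)
  then show "L = L'" by simp
qed

lemma lim_add: "madic_lim s (L::'a) \<Longrightarrow> madic_lim t M \<Longrightarrow> madic_lim (\<lambda>n. s n + t n) (L + M)"
  unfolding madic_lim_def
proof (intro allI)
  fix k assume a: "\<forall>k. \<exists>N. \<forall>n\<ge>N. s n - L \<in> mpow k" "\<forall>k. \<exists>N. \<forall>n\<ge>N. t n - M \<in> mpow k"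
  obtain N1 where N1: "\<forall>n\<ge>N1. s n - L \<in> mpow k" using a(1) by blast
  obtain N2 where N2: "\<forall>n\<ge>N2. t n - M \<in> mpow k" using a(2) by blast
  have "\<forall>n\<ge>max N1 N2. s n + t n - (L + M) \<in> mpow k"
  proof (intro allI impI)
    fix n assume "max N1 N2 \<le> n"
    then have "(s n - L) + (t n - M) \<in> mpow k" using N1 N2 mp_add by simp
    then show "s n + t n - (L + M) \<in> mpow k" by (simp add: algebra_simps)
  qed
  then show "\<exists>N. \<forall>n\<ge>N. s n + t n - (L + M) \<in> mpow k" by blast
qed

lemma lim_ml: "madic_lim s (L::'a) \<Longrightarrow> madic_lim (\<lambda>n. r * s n) (r * L)"
  unfolding madic_lim_def
proof (intro allI)
  fix k assume a: "\<forall>k. \<exists>N. \<forall>n\<ge>N. s n - L \<in> mpow k"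
  obtain N1 where N1: "\<forall>n\<ge>N1. s n - L \<in> mpow k" using a(1) by blast
  have "\<forall>n\<ge>N1. r * s n - r * L \<in> mpow k"
    using N1 mp_ml[of _ k r] by (simp add: right_diff_distrib[symmetric])
  then show "\<exists>N. \<forall>n\<ge>N. r * s n - r * L \<in> mpow k" by blast
qed

lemma lim_mr: "madic_lim s (L::'a) \<Longrightarrow> madic_lim (\<lambda>n. s n * r) (L * r)"
  unfolding madic_lim_def
proof (intro allI)
  fix k assume a: "\<forall>k. \<exists>N. \<forall>n\<ge>N. s n - L \<in> mpow k"
  obtain N1 where N1: "\<forall>n\<ge>N1. s n - L \<in> mpow k" using a(1) by blast
  have "\<forall>n\<ge>N1. s n * r - L * r \<in> mpow k"
    using N1 mp_mr[of _ k r] by (simp add: left_diff_distrib[symmetric])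
  then show "\<exists>N. \<forall>n\<ge>N. s n * r - L * r \<in> mpow k" by blast
qed

lemma lim_diff: "madic_lim s (L::'a) \<Longrightarrow> madic_lim t M \<Longrightarrow> madic_lim (\<lambda>n. s n - t n) (L - M)"
  using lim_add[of s L "\<lambda>n. (-1) * t n" "(-1) * M"] lim_ml[of t M "-1"] by simp

lemma lim_const: "\<forall>n\<ge>N. s n = (c::'a) \<Longrightarrow> madic_lim s c"
  unfolding madic_lim_def by (intro allI exI[of _ N]) auto

lemma lim_closed: "madic_lim s (L::'a) \<Longrightarrow> \<forall>n. s n \<in> mpow k \<Longrightarrow> L \<in> mpow k"
proof -
  assume a: "madic_lim s L" "\<forall>n. s n \<in> mpow k"
  obtain N where "\<forall>n\<ge>N. s n - L \<in> mpow k" using a(1) unfolding madic_lim_def by blast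
  then have "s N - (s N - L) \<in> mpow k" using a(2) mp_diff by blast
  then show ?thesis by simp
qed

lemma msum_eq: "madic_lim (\<lambda>N. \<Sum>i<N. a i) (L::'a) \<Longrightarrow> msum a = L"
  unfolding msum_def using lim_unique by blast

lemma psum_diff: "(n'::nat) \<le> n \<Longrightarrow> (\<Sum>i<n. a i) - (\<Sum>i<n'. a i) = (\<Sum>i\<in>{n'..<n}. (a i::'a))"
proof -
  assume "n' \<le> n"
  then have "(\<Sum>i<n'. a i) + (\<Sum>i\<in>{n'..<n}. a i) = (\<Sum>i<n. a i)"
    using sum.atLeastLessThan_concat[of 0 n' n a] by (simp add: atLeast0LessThan)
  then show ?thesis by (simp add: algebra_simps)
qed

lemma mnull_conv: "mnull (a::nat \<Rightarrow> 'a) \<Longrightarrow> madic_lim (\<lambda>N. \<Sum>i<N. a i) (msum a)"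
proof -
  assume a: "mnull a"
  have "madic_cauchy (\<lambda>N. \<Sum>i<N. a i)"
    unfolding madic_cauchy_def
  proof
    fix k
    obtain N where N: "\<forall>i\<ge>N. a i \<in> mpow k" using a unfolding mnull_def by blast
    have c: "(\<Sum>i<n. a i) - (\<Sum>i<n'. a i) \<in> mpow k" if "N \<le> n'" "n' \<le> n" for n n'
      using psum_diff[OF that(2), of a] N that by (auto intro!: mp_sum)
    have "\<forall>n\<ge>N. \<forall>n'\<ge>N. (\<Sum>i<n. a i) - (\<Sum>i<n'. a i) \<in> mpow k"
    proof (intro allI impI)
      fix n n' assume "N \<le> n" "N \<le> n'"
      show "(\<Sum>i<n. a i) - (\<Sum>i<n'. a i) \<in> mpow k"
      proof (cases "n' \<le> n")
        case True then show ?thesis using c \<open>N \<le> n'\<close> by blast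
      next
        case False
        then have "(\<Sum>i<n'. a i) - (\<Sum>i<n. a i) \<in> mpow k" using c \<open>N \<le> n\<close> by simp
        then have "- ((\<Sum>i<n'. a i) - (\<Sum>i<n. a i)) \<in> mpow k" by (rule mp_uminus)
        then show ?thesis by simp
      qed
    qed
    then show "\<exists>N. \<forall>n\<ge>N. \<forall>n'\<ge>N. (\<Sum>i<n. a i) - (\<Sum>i<n'. a i) \<in> mpow k" by blast
  qed
  then obtain L where "madic_lim (\<lambda>N. \<Sum>i<N. a i) L" using cmp unfolding madic_complete_def by blast
  then show ?thesis using msum_eq by simp
qed

lemma msum_add: "mnull a \<Longrightarrow> mnull b \<Longrightarrow> msum (\<lambda>i. a i + b i) = msum a + msum (b::nat \<Rightarrow> 'a)"
  by (rule msum_eq) (simp add: sum.distrib lim_add mnull_conv)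

lemma msum_diff: "mnull a \<Longrightarrow> mnull b \<Longrightarrow> msum (\<lambda>i. a i - b i) = msum a - msum (b::nat \<Rightarrow> 'a)"
  by (rule msum_eq) (simp add: sum_subtractf lim_diff mnull_conv)

lemma msum_ml: "mnull a \<Longrightarrow> msum (\<lambda>i. r * a i) = r * msum (a::nat \<Rightarrow> 'a)"
  by (rule msum_eq) (use lim_ml[OF mnull_conv] in \<open>simp add: sum_distrib_left\<close>)

lemma msum_mr: "mnull a \<Longrightarrow> msum (\<lambda>i. a i * r) = msum (a::nat \<Rightarrow> 'a) * r"
  by (rule msum_eq) (use lim_mr[OF mnull_conv] in \<open>simp add: sum_distrib_right\<close>)

lemma msum_sum_lim: "finite J \<Longrightarrow> (\<forall>j\<in>J. mnull (a j)) \<Longrightarrow>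
   madic_lim (\<lambda>N. \<Sum>i<N. \<Sum>j\<in>J. a j i) (\<Sum>j\<in>J. msum (a j::nat \<Rightarrow> 'a))"
proof (induction J rule: finite_induct)
  case empty then show ?case by (simp add: lim_const)
next
  case (insert x F)
  then have "madic_lim (\<lambda>N. (\<Sum>i<N. a x i) + (\<Sum>i<N. \<Sum>j\<in>F. a j i)) (msum (a x) + (\<Sum>j\<in>F. msum (a j)))"
    by (intro lim_add mnull_conv) auto
  then show ?case using insert by (simp add: sum.distrib)
qed

lemma msum_sum: "finite J \<Longrightarrow> (\<forall>j\<in>J. mnull (a j)) \<Longrightarrow>
   msum (\<lambda>i. \<Sum>j\<in>J. a j i) = (\<Sum>j\<in>J. msum (a j::nat \<Rightarrow> 'a))"
  by (rule msum_eq) (rule msum_sum_lim)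

lemma msum_closed: "mnull a \<Longrightarrow> (\<forall>i. a i \<in> mpow k) \<Longrightarrow> msum (a::nat \<Rightarrow> 'a) \<in> mpow k"
  by (rule lim_closed[OF mnull_conv]) (auto intro: mp_sum)

lemma psum_const: "\<forall>i\<ge>(M::nat). a i = 0 \<Longrightarrow> M \<le> N \<Longrightarrow> (\<Sum>i<N. a i) = (\<Sum>i<M. (a i::'a))"
proof -
  assume a: "\<forall>i\<ge>M. a i = 0" "M \<le> N"
  have "(\<Sum>i<N. a i) - (\<Sum>i<M. a i) = (\<Sum>i\<in>{M..<N}. a i)" using psum_diff[OF a(2)] .
  also have "\<dots> = 0" using a(1) by simp
  finally show ?thesis by simp
qed

lemma msum_finite: "\<forall>i\<ge>(M::nat). a i = 0 \<Longrightarrow> msum a = (\<Sum>i<M. (a i::'a))"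
proof -
  assume a: "\<forall>i\<ge>M. a i = 0"
  show ?thesis by (rule msum_eq, rule lim_const[of M]) (use psum_const[OF a] in blast)
qed

lemma mnull_rate: "\<forall>i. a i \<in> mpow (i - c) \<Longrightarrow> mnull (a::nat \<Rightarrow> 'a)"
  unfolding mnull_def
proof
  fix k assume "\<forall>i. a i \<in> mpow (i - c)"
  then have "\<forall>i\<ge>k + c. a i \<in> mpow k"
  proof (intro allI impI)
    fix i assume "\<forall>i. a i \<in> mpow (i - c)" "k + c \<le> i"
    then show "a i \<in> mpow k" using mp_mono[of "a i" "i - c" k] by simp
  qed
  then show "\<exists>N. \<forall>i\<ge>N. a i \<in> mpow k" by blast
qed

lemma closeD_0[simp]: "closeD d 0 Z (Z'::nat \<Rightarrow> 'a)" unfolding closeD_def by simp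
lemma closeD_mono: "closeD d k Z (Z'::nat \<Rightarrow> 'a) \<Longrightarrow> j \<le> k \<Longrightarrow> closeD d j Z Z'"
  unfolding closeD_def
proof
  fix n assume "\<forall>n. Z n - Z' n \<in> mpow (k - d n)" "j \<le> k"
  then show "Z n - Z' n \<in> mpow (j - d n)" using mp_mono[of "Z n - Z' n" "k - d n" "j - d n"] by simp
qed
lemma closeD_trans: "closeD d k Z (Z'::nat \<Rightarrow> 'a) \<Longrightarrow> closeD d k Z' Z'' \<Longrightarrow> closeD d k Z Z''"
  unfolding closeD_def
proof
  fix n assume "\<forall>n. Z n - Z' n \<in> mpow (k - d n)" "\<forall>n. Z' n - Z'' n \<in> mpow (k - d n)"
  then have "(Z n - Z' n) + (Z' n - Z'' n) \<in> mpow (k - d n)" using mp_add by blast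
  then show "Z n - Z'' n \<in> mpow (k - d n)" by simp
qed
lemma closeD_sym: "closeD d k Z (Z'::nat \<Rightarrow> 'a) \<Longrightarrow> closeD d k Z' Z"
  unfolding closeD_def
proof
  fix n assume "\<forall>n. Z n - Z' n \<in> mpow (k - d n)"
  then show "Z' n - Z n \<in> mpow (k - d n)" using mp_uminus[of "Z n - Z' n" "k - d n"] by simp
qed
lemma closeD_all: "(\<And>k. closeD d k Z (Z'::nat \<Rightarrow> 'a)) \<Longrightarrow> Z = Z'"
proof
  fix n assume a: "\<And>k. closeD d k Z Z'"
  have "Z n - Z' n \<in> mpow (m + d n - d n)" for m
    using a[of "m + d n"] unfolding closeD_def by blast
  then show "Z n = Z' n" using mp_all_zero[of "Z n - Z' n"] by simp
qed

lemma fixpt: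
  assumes contr: "\<And>k Z Z'. closeD d k Z Z' \<Longrightarrow> closeD d (Suc k) (\<Phi> Z) (\<Phi> (Z'::nat \<Rightarrow> 'a))"
  shows "\<exists>Z. \<Phi> Z = Z \<and> (\<forall>Z'. \<Phi> Z' = Z' \<longrightarrow> Z' = Z)"
proof -
  define it where "it k = (\<Phi> ^^ k) (\<lambda>_. 0)" for k
  have itS: "it (Suc k) = \<Phi> (it k)" for k unfolding it_def by simp
  have step: "closeD d k (it (Suc k)) (it k)" for k
  proof (induction k)
    case 0 then show ?case by simp
  next
    case (Suc k) then show ?case using contr[OF Suc] itS by simp
  qed
  have far: "closeD d k (it k') (it k)" if "k \<le> k'" for k k'
    using that
  proof (induction k' rule: dec_induct)
    case base then show ?case unfolding closeD_def by simp
  next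
    case (step m)
    have "closeD d k (it (Suc m)) (it m)" using closeD_mono[OF \<open>closeD d m (it (Suc m)) (it m)\<close>] step(1) .
    then show ?case using closeD_trans step(3) by blast
  qed
  have "\<exists>L. madic_lim (\<lambda>k. it k n) L" for n
  proof -
    have "madic_cauchy (\<lambda>k. it k n)"
      unfolding madic_cauchy_def
    proof
      fix L
      have c: "it k' n - it k n \<in> mpow L" if "L + d n \<le> k" "k \<le> k'" for k k'
      proof -
        have "it k' n - it k n \<in> mpow (k - d n)" using far[OF that(2)] unfolding closeD_def by blast
        moreover have "L \<le> k - d n" using that(1) by simp
        ultimately show ?thesis by (rule mp_mono)
      qed
      have "\<forall>k\<ge>L + d n. \<forall>k'\<ge>L + d n. it k n - it k' n \<in> mpow L"
      proof (intro allI impI)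
        fix k k' assume "L + d n \<le> k" "L + d n \<le> k'"
        show "it k n - it k' n \<in> mpow L"
        proof (cases "k' \<le> k")
          case True then show ?thesis using c \<open>L + d n \<le> k'\<close> by blast
        next
          case False
          then have "it k' n - it k n \<in> mpow L" using c \<open>L + d n \<le> k\<close> by simp
          then show ?thesis using mp_uminus[of "it k' n - it k n" L] by simp
        qed
      qed
      then show "\<exists>N. \<forall>k\<ge>N. \<forall>k'\<ge>N. it k n - it k' n \<in> mpow L" by blast
    qed
    then show ?thesis using cmp unfolding madic_complete_def by blast
  qed
  then obtain Zl where Zl: "\<And>n. madic_lim (\<lambda>k. it k n) (Zl n)" by metis
  have cl: "closeD d k Zl (it k)" for k
    unfolding closeD_def
  proof
    fix n
    obtain N where N: "\<forall>j\<ge>N. it j n - Zl n \<in> mpow (k - d n)" using Zl[of n] unfolding madic_lim_def by blast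
    define j where "j = max N k"
    have 1: "it j n - Zl n \<in> mpow (k - d n)" using N unfolding j_def by simp
    have 2: "it j n - it k n \<in> mpow (k - d n)" using far[of k j] unfolding j_def closeD_def by simp
    have "(it j n - it k n) - (it j n - Zl n) \<in> mpow (k - d n)" using 1 2 mp_diff by blast
    then show "Zl n - it k n \<in> mpow (k - d n)" by simp
  qed
  have "closeD d (Suc k) (\<Phi> Zl) Zl" for k
  proof -
    have "closeD d (Suc k) (\<Phi> Zl) (it (Suc k))" using contr[OF cl[of k]] itS by simp
    then show ?thesis using closeD_sym[OF cl[of "Suc k"]] closeD_trans by blast
  qed
  then have "closeD d k (\<Phi> Zl) Zl" for k using closeD_mono[of d "Suc k" "\<Phi> Zl" Zl k] by simp
  then have fx: "\<Phi> Zl = Zl" using closeD_all by blast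
  have "Z' = Zl" if "\<Phi> Z' = Z'" for Z'
  proof -
    have "closeD d k Z' Zl" for k
    proof (induction k)
      case 0 then show ?case by simp
    next
      case (Suc k) then show ?case using contr[OF Suc] that fx by simp
    qed
    then show ?thesis using closeD_all by blast
  qed
  then show ?thesis using fx by blast
qed

end

definition Xs :: "('a::ring_1 \<Rightarrow> 'a) \<Rightarrow> ('a \<Rightarrow> 'a) \<Rightarrow> (nat \<Rightarrow> 'a) \<Rightarrow> nat \<Rightarrow> 'a" where
  "Xs s d h n = (case n of 0 \<Rightarrow> 0 | Suc n' \<Rightarrow> s (h n')) + d (h n)"

definition Xp :: "('a::ring_1 \<Rightarrow> 'a) \<Rightarrow> ('a \<Rightarrow> 'a) \<Rightarrow> nat \<Rightarrow> (nat \<Rightarrow> 'a) \<Rightarrow> nat \<Rightarrow> 'a" where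
  "Xp s d i = (Xs s d ^^ i)"

definition ee :: "nat \<Rightarrow> nat \<Rightarrow> 'a::ring_1" where
  "ee k = (\<lambda>n. if n = k then 1 else 0)"

definition poly_lt :: "nat \<Rightarrow> (nat \<Rightarrow> 'a::ring_1) \<Rightarrow> bool" where
  "poly_lt M f \<longleftrightarrow> (\<forall>i\<ge>M. f i = 0)"

context wp
begin

abbreviation "X1 \<equiv> Xs \<sigma> \<delta>"
abbreviation "XP \<equiv> Xp \<sigma> \<delta>"
abbreviation "mul \<equiv> skew_mult \<sigma> \<delta>"

lemma Xp_0[simp]: "XP 0 h = h" unfolding Xp_def by simp
lemma Xp_Suc: "XP (Suc i) h = X1 (XP i h)" unfolding Xp_def by simp

lemma xc_lvl: "r \<in> mpow v \<Longrightarrow> xc \<sigma> \<delta> i k r \<in> mpow (v + (i - k))"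
proof (induction i arbitrary: k)
  case 0 then show ?case by simp
next
  case (Suc i)
  show ?case
  proof (cases k)
    case 0
    have "\<delta> (xc \<sigma> \<delta> i 0 r) \<in> mpow (Suc (v + (i - 0)))" using mp_d Suc by blast
    then show ?thesis using 0 by simp
  next
    case (Suc k')
    have 1: "\<sigma> (xc \<sigma> \<delta> i k' r) \<in> mpow (v + (i - k'))" using mp_s Suc.IH Suc.prems by blast
    have "\<delta> (xc \<sigma> \<delta> i k r) \<in> mpow (Suc (v + (i - k)))" using mp_d Suc.IH Suc.prems by blast
    then have 2: "\<delta> (xc \<sigma> \<delta> i k r) \<in> mpow (v + (i - k'))"
      by (rule mp_mono) (use Suc in simp)
    show ?thesis using mp_add[OF 1 2] Suc by simp
  qed
qed

lemma xc_0_1: "xc \<sigma> \<delta> k 0 1 = (if k = 0 then 1 else 0)"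
  by (induction k) (auto simp: d_one d_zero)

lemma Xp_xc: "XP i h n = (\<Sum>j\<le>n. xc \<sigma> \<delta> i (n - j) (h j))"
proof (induction i arbitrary: n)
  case 0
  have "(\<Sum>j\<le>n. xc \<sigma> \<delta> 0 (n - j) (h j)) = (\<Sum>j\<le>n. if j = n then h j else 0)"
    by (rule sum.cong) auto
  then show ?case by simp
next
  case (Suc i)
  have e: "xc \<sigma> \<delta> (Suc i) (n - j) (h j) =
     (case n - j of 0 \<Rightarrow> 0 | Suc k' \<Rightarrow> \<sigma> (xc \<sigma> \<delta> i k' (h j))) + \<delta> (xc \<sigma> \<delta> i (n - j) (h j))" for j
    by simp
  have S2: "(\<Sum>j\<le>n. \<delta> (xc \<sigma> \<delta> i (n - j) (h j))) = \<delta> (XP i h n)"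
    by (simp add: Suc.IH d_sum)
  have S1: "(\<Sum>j\<le>n. (case n - j of 0 \<Rightarrow> 0 | Suc k' \<Rightarrow> \<sigma> (xc \<sigma> \<delta> i k' (h j)))) =
      (case n of 0 \<Rightarrow> 0 | Suc n' \<Rightarrow> \<sigma> (XP i h n'))"
  proof (cases n)
    case 0 then show ?thesis by simp
  next
    case (Suc n')
    have "(\<Sum>j\<le>n. (case n - j of 0 \<Rightarrow> 0 | Suc k' \<Rightarrow> \<sigma> (xc \<sigma> \<delta> i k' (h j)))) =
        (\<Sum>j\<le>n'. (case Suc n' - j of 0 \<Rightarrow> 0 | Suc k' \<Rightarrow> \<sigma> (xc \<sigma> \<delta> i k' (h j))))"
      using Suc by (simp add: sum.atMost_Suc)
    also have "\<dots> = (\<Sum>j\<le>n'. \<sigma> (xc \<sigma> \<delta> i (n' - j) (h j)))"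
      by (rule sum.cong) (auto simp: Suc_diff_le)
    also have "\<dots> = \<sigma> (XP i h n')" by (simp add: Suc.IH s_sum)
    finally show ?thesis using Suc by simp
  qed
  show ?case
    unfolding Xp_Suc Xs_def
    by (simp only: e sum.distrib S1 S2)
qed

lemma xc_rate: "f i * xc \<sigma> \<delta> i (n - j) (g j) \<in> mpow (i - (n - j))"
  using mp_ml[OF xc_lvl[of "g j" 0 i "n - j"]] by simp

lemma mul_eq: "mul f g n = msum (\<lambda>i. f i * XP i g n)"
proof -
  have "mul f g n = (\<Sum>j\<le>n. msum (\<lambda>i. f i * xc \<sigma> \<delta> i (n - j) (g j)))"
    unfolding skew_mult_def by simp
  also have "\<dots> = msum (\<lambda>i. \<Sum>j\<le>n. f i * xc \<sigma> \<delta> i (n - j) (g j))"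
    by (rule msum_sum[symmetric]) (auto intro: mnull_rate xc_rate)
  also have "\<dots> = msum (\<lambda>i. f i * XP i g n)"
    by (simp add: Xp_xc sum_distrib_left)
  finally show ?thesis .
qed

lemma X1_lvl: "(\<forall>j. h j \<in> mpow (v + (M - j))) \<Longrightarrow> X1 h n \<in> mpow (v + (Suc M - n))"
proof -
  assume a: "\<forall>j. h j \<in> mpow (v + (M - j))"
  show ?thesis
  proof (cases n)
    case 0
    have "\<delta> (h 0) \<in> mpow (Suc (v + (M - 0)))" using a mp_d by blast
    then show ?thesis using 0 by (simp add: Xs_def)
  next
    case (Suc n')
    have 1: "\<sigma> (h n') \<in> mpow (v + (M - n'))" using a mp_s by blast
    have "\<delta> (h n) \<in> mpow (Suc (v + (M - n)))" using a mp_d by blast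
    then have 2: "\<delta> (h n) \<in> mpow (v + (M - n'))" by (rule mp_mono) (use Suc in simp)
    show ?thesis using mp_add[OF 1 2] Suc by (simp add: Xs_def)
  qed
qed

lemma Xp_lvl: "(\<forall>j. h j \<in> mpow (v + (M - j))) \<Longrightarrow> XP i h n \<in> mpow (v + (M + i - n))"
proof (induction i arbitrary: n)
  case 0 then show ?case by simp
next
  case (Suc i)
  then have "\<forall>j. XP i h j \<in> mpow (v + (M + i - j))" by blast
  then show ?case unfolding Xp_Suc using X1_lvl[of "XP i h" v "M + i" n] by simp
qed

lemma Xp_rate: "XP i g n \<in> mpow (i - n)"
  using Xp_lvl[of g 0 0 i n] by simp

lemma mnull_mXp: "mnull (\<lambda>i. a i * XP i g n)"
  by (rule mnull_rate[of _ n]) (simp add: mp_ml Xp_rate)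

lemma X1_add: "X1 (\<lambda>n. h n + h' n) = (\<lambda>n. X1 h n + X1 h' n)"
  by (rule ext, simp add: Xs_def s_add d_add split: nat.split)
lemma X1_diff: "X1 (\<lambda>n. h n - h' n) = (\<lambda>n. X1 h n - X1 h' n)"
  by (rule ext, simp add: Xs_def s_diff d_diff split: nat.split)
lemma Xp_add: "XP i (\<lambda>n. h n + h' n) = (\<lambda>n. XP i h n + XP i h' n)"
  by (induction i) (simp_all add: Xp_Suc X1_add)
lemma Xp_diff: "XP i (\<lambda>n. h n - h' n) = (\<lambda>n. XP i h n - XP i h' n)"
  by (induction i) (simp_all add: Xp_Suc X1_diff)

lemma X1_ee: "X1 (ee k) = ee (Suc k)"
  by (rule ext) (simp add: Xs_def ee_def s_one s_zero d_one d_zero split: nat.split)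
lemma Xp_ee: "XP i (ee k) = ee (i + k)"
  by (induction i) (simp_all add: Xp_Suc X1_ee)

lemma mnull_poly: "poly_lt M a \<Longrightarrow> mnull a"
  unfolding poly_lt_def mnull_def by (metis mp_zero)

lemma mul_poly: "poly_lt M f \<Longrightarrow> mul f g n = (\<Sum>i<M. f i * XP i g n)"
  unfolding mul_eq poly_lt_def by (rule msum_finite) simp

lemma poly_lt_mono: "poly_lt M f \<Longrightarrow> M \<le> M' \<Longrightarrow> poly_lt M' f"
  unfolding poly_lt_def by auto

lemma X1_poly: "poly_lt M h \<Longrightarrow> poly_lt (Suc M) (X1 h)"
  unfolding poly_lt_def Xs_def by (auto simp: s_zero d_zero split: nat.split)

lemma Xp_poly: "poly_lt M h \<Longrightarrow> poly_lt (M + i) (XP i h)"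
  by (induction i) (simp_all add: Xp_Suc X1_poly)

lemma mul_poly_poly: "poly_lt M f \<Longrightarrow> poly_lt M g \<Longrightarrow> poly_lt (M + M) (mul f g)"
proof -
  assume f: "poly_lt M f" and g: "poly_lt M g"
  show ?thesis unfolding poly_lt_def
  proof (intro allI impI)
    fix p assume p: "M + M \<le> p"
    have "f i * XP i g p = 0" if "i < M" for i
      using Xp_poly[OF g, of i] p that unfolding poly_lt_def by simp
    then show "mul f g p = 0" by (simp add: mul_poly[OF f])
  qed
qed

lemma X1_mul_poly: "poly_lt M \<phi> \<Longrightarrow> X1 (mul \<phi> h) = mul (X1 \<phi>) h"
proof (rule ext)
  fix n assume ph: "poly_lt M \<phi>"
  have phM: "\<phi> M = 0" using ph unfolding poly_lt_def by simp
  have L: "X1 (mul \<phi> h) n = (case n of 0 \<Rightarrow> 0 | Suc n' \<Rightarrow> (\<Sum>p<M. \<sigma> (\<phi> p) * \<sigma> (XP p h n'))) +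
      ((\<Sum>p<M. \<delta> (\<phi> p) * XP p h n) + (\<Sum>p<M. \<sigma> (\<phi> p) * \<delta> (XP p h n)))"
    unfolding Xs_def by (simp add: mul_poly[OF ph] s_sum d_sum s_mult d_mult sum.distrib split: nat.split)
  have R: "mul (X1 \<phi>) h n = (\<Sum>p<M. \<sigma> (\<phi> p) * XP (Suc p) h n) + (\<Sum>p<M. \<delta> (\<phi> p) * XP p h n)"
  proof -
    have "mul (X1 \<phi>) h n = (\<Sum>p<Suc M. X1 \<phi> p * XP p h n)"
      by (rule mul_poly[OF X1_poly[OF ph]])
    also have "\<dots> = (\<Sum>p<Suc M. (case p of 0 \<Rightarrow> 0 | Suc p' \<Rightarrow> \<sigma> (\<phi> p')) * XP p h n) +
        (\<Sum>p<Suc M. \<delta> (\<phi> p) * XP p h n)"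
      by (simp add: Xs_def distrib_right sum.distrib)
    also have "(\<Sum>p<Suc M. (case p of 0 \<Rightarrow> 0 | Suc p' \<Rightarrow> \<sigma> (\<phi> p')) * XP p h n) =
        (\<Sum>p<M. \<sigma> (\<phi> p) * XP (Suc p) h n)"
      by (simp only: sum.lessThan_Suc_shift) simp
    also have "(\<Sum>p<Suc M. \<delta> (\<phi> p) * XP p h n) = (\<Sum>p<M. \<delta> (\<phi> p) * XP p h n)"
      by (simp add: phM d_zero)
    finally show ?thesis .
  qed
  have R': "mul (X1 \<phi>) h n = (case n of 0 \<Rightarrow> 0 | Suc n' \<Rightarrow> (\<Sum>p<M. \<sigma> (\<phi> p) * \<sigma> (XP p h n'))) +
      ((\<Sum>p<M. \<delta> (\<phi> p) * XP p h n) + (\<Sum>p<M. \<sigma> (\<phi> p) * \<delta> (XP p h n)))"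
    unfolding R Xp_Suc Xs_def
    by (cases n) (simp_all add: distrib_left sum.distrib algebra_simps)
  show "X1 (mul \<phi> h) n = mul (X1 \<phi>) h n" using L R' by simp
qed

lemma Xp_mul_poly: "poly_lt M \<phi> \<Longrightarrow> XP i (mul \<phi> h) = mul (XP i \<phi>) h"
proof (induction i)
  case 0 then show ?case by simp
next
  case (Suc i)
  then show ?case unfolding Xp_Suc using X1_mul_poly[OF Xp_poly[OF Suc.prems, of i]] by simp
qed

lemma assoc_poly: "poly_lt M f \<Longrightarrow> poly_lt M g \<Longrightarrow> mul f (mul g h) = mul (mul f g) h"
proof (rule ext)
  fix n assume f: "poly_lt M f" and g: "poly_lt M g"
  have gi: "poly_lt (M + M) (XP i g)" if "i < M" for i
    using poly_lt_mono[OF Xp_poly[OF g, of i]] that by simp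
  have "mul f (mul g h) n = (\<Sum>i<M. f i * XP i (mul g h) n)" by (rule mul_poly[OF f])
  also have "\<dots> = (\<Sum>i<M. f i * (\<Sum>p<M + M. XP i g p * XP p h n))"
    by (rule sum.cong) (simp_all add: Xp_mul_poly[OF g] mul_poly[OF gi])
  also have "\<dots> = (\<Sum>p<M + M. (\<Sum>i<M. f i * XP i g p) * XP p h n)"
    by (simp add: sum_distrib_left sum_distrib_right mult.assoc sum.swap[of _ "{..<M}"])
  also have "\<dots> = mul (mul f g) h n"
    by (simp add: mul_poly[OF mul_poly_poly[OF f g]] mul_poly[OF f])
  finally show "mul f (mul g h) n = mul (mul f g) h n" .
qed

end

context wp
begin

abbreviation "vcl \<equiv> closeD (\<lambda>_::nat. 0::nat)"
abbreviation "wcl \<equiv> closeD (\<lambda>n::nat. n)"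

lemma mul_diff_left: "mul f g n - mul f' g n = msum (\<lambda>i. (f i - f' i) * XP i g n)"
proof -
  have "msum (\<lambda>i. f i * XP i g n - f' i * XP i g n) = mul f g n - mul f' g n"
    unfolding mul_eq by (rule msum_diff[OF mnull_mXp mnull_mXp])
  then show ?thesis by (simp add: left_diff_distrib)
qed

lemma mul_diff_right: "mul f g n - mul f g' n = msum (\<lambda>i. f i * XP i (\<lambda>j. g j - g' j) n)"
proof -
  have "msum (\<lambda>i. f i * XP i g n - f i * XP i g' n) = mul f g n - mul f g' n"
    unfolding mul_eq by (rule msum_diff[OF mnull_mXp mnull_mXp])
  then show ?thesis by (simp add: right_diff_distrib Xp_diff)
qed

lemma mul_add_left: "mul (\<lambda>i. f i + f' i) g n = mul f g n + mul f' g n"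
proof -
  have "msum (\<lambda>i. f i * XP i g n + f' i * XP i g n) = mul f g n + mul f' g n"
    unfolding mul_eq by (rule msum_add[OF mnull_mXp mnull_mXp])
  then show ?thesis by (simp add: distrib_right mul_eq)
qed

lemma mul_add_right: "mul f (\<lambda>j. g j + g' j) n = mul f g n + mul f g' n"
proof -
  have "msum (\<lambda>i. f i * XP i g n + f i * XP i g' n) = mul f g n + mul f g' n"
    unfolding mul_eq by (rule msum_add[OF mnull_mXp mnull_mXp])
  then show ?thesis by (simp add: distrib_left mul_eq Xp_add)
qed

lemma wcl_mul_left: "wcl M f f' \<Longrightarrow> wcl M (mul f g) (mul f' g)"
  unfolding closeD_def
proof
  fix n assume a: "\<forall>n. f n - f' n \<in> mpow (M - n)"
  have "(f i - f' i) * XP i g n \<in> mpow (M - n)" for i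
  proof -
    have "(f i - f' i) * XP i g n \<in> mpow (M - i + (i - n))"
      using mp_mult a Xp_rate by blast
    then show ?thesis by (rule mp_mono) simp
  qed
  then show "mul f g n - mul f' g n \<in> mpow (M - n)"
    unfolding mul_diff_left by (intro msum_closed mnull_mXp) auto
qed

lemma wcl_mul_right: "wcl M g g' \<Longrightarrow> wcl M (mul f g) (mul f g')"
  unfolding closeD_def
proof
  fix n assume a: "\<forall>n. g n - g' n \<in> mpow (M - n)"
  have "f i * XP i (\<lambda>j. g j - g' j) n \<in> mpow (M - n)" for i
  proof -
    have "XP i (\<lambda>j. g j - g' j) n \<in> mpow (0 + (M + i - n))"
      by (rule Xp_lvl) (use a in simp)
    then have "XP i (\<lambda>j. g j - g' j) n \<in> mpow (M - n)" by (rule mp_mono) simp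
    then show ?thesis by (rule mp_ml)
  qed
  then show "mul f g n - mul f g' n \<in> mpow (M - n)"
    unfolding mul_diff_right by (intro msum_closed mnull_mXp) auto
qed

definition trunc :: "nat \<Rightarrow> (nat \<Rightarrow> 'a) \<Rightarrow> nat \<Rightarrow> 'a" where
  "trunc M f = (\<lambda>i. if i < M then f i else 0)"

lemma trunc_poly: "poly_lt M (trunc M f)" unfolding poly_lt_def trunc_def by simp
lemma trunc_wcl: "wcl M f (trunc M f)" unfolding closeD_def trunc_def by simp

lemma assoc: "mul f (mul g h) = mul (mul f g) h"
proof (rule closeD_all[of "\<lambda>n. n"])
  fix M
  let ?f = "trunc M f" and ?g = "trunc M g"
  have c1: "wcl M (mul f g) (mul ?f ?g)"
    using closeD_trans[OF wcl_mul_left[OF trunc_wcl] wcl_mul_right[OF trunc_wcl]] .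
  have c2: "wcl M (mul (mul f g) h) (mul (mul ?f ?g) h)" by (rule wcl_mul_left[OF c1])
  have c3: "wcl M (mul g h) (mul ?g h)" by (rule wcl_mul_left[OF trunc_wcl])
  have c4: "wcl M (mul f (mul g h)) (mul ?f (mul ?g h))"
    using closeD_trans[OF wcl_mul_left[OF trunc_wcl] wcl_mul_right[OF c3]] .
  have e: "mul ?f (mul ?g h) = mul (mul ?f ?g) h" by (rule assoc_poly[OF trunc_poly trunc_poly])
  show "wcl M (mul f (mul g h)) (mul (mul f g) h)"
    using closeD_trans[OF c4[unfolded e] closeD_sym[OF c2]] .
qed

lemma vcl_mul_left: "vcl k Z Z' \<Longrightarrow> vcl k (mul Z g) (mul Z' g)"
  unfolding closeD_def
proof
  fix n assume a: "\<forall>n. Z n - Z' n \<in> mpow (k - 0)"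
  show "mul Z g n - mul Z' g n \<in> mpow (k - 0)"
    unfolding mul_diff_left by (intro msum_closed mnull_mXp) (use a mp_mr in auto)
qed

lemma vcl_mul_mid: "vcl k Z Z' \<Longrightarrow> (\<forall>j. B j \<in> mid) \<Longrightarrow> vcl (Suc k) (mul Z B) (mul Z' B)"
  unfolding closeD_def
proof
  fix n assume a: "\<forall>n. Z n - Z' n \<in> mpow (k - 0)" and B: "\<forall>j. B j \<in> mid"
  have xb: "XP i B n \<in> mpow 1" for i
  proof -
    have "XP i B n \<in> mpow (1 + (0 + i - n))" by (rule Xp_lvl) (use B mid_mp1 in simp)
    then show ?thesis by (rule mp_mono) simp
  qed
  have "(Z i - Z' i) * XP i B n \<in> mpow (k + 1)" for i
    using mp_mult[of "Z i - Z' i" k "XP i B n" 1] a xb by simp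
  then show "mul Z B n - mul Z' B n \<in> mpow (Suc k - 0)"
    unfolding mul_diff_left by (intro msum_closed mnull_mXp) auto
qed

lemma skew_one_ee: "skew_one = ee 0" unfolding skew_one_def ee_def by simp

lemma mul_one_left: "mul skew_one g = g"
proof
  fix n
  have "poly_lt 1 (skew_one::nat \<Rightarrow> 'a)" unfolding poly_lt_def skew_one_def by simp
  then show "mul skew_one g n = g n" by (simp add: mul_poly skew_one_def)
qed

lemma mul_ee_right: "mul f (ee s) n = (if s \<le> n then f (n - s) else 0)"
proof -
  have "mul f (ee s) n = msum (\<lambda>i. f i * ee (i + s) n)" by (simp add: mul_eq Xp_ee)
  also have "\<dots> = (\<Sum>i<Suc n. f i * ee (i + s) n)"
    by (rule msum_finite) (simp add: ee_def)
  also have "\<dots> = (\<Sum>i<Suc n. if i = n - s then (if s \<le> n then f i else 0) else 0)"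
    by (rule sum.cong) (auto simp: ee_def)
  also have "\<dots> = (if s \<le> n then f (n - s) else 0)" by simp
  finally show ?thesis .
qed

lemma mul_one_right: "mul f skew_one = f"
proof
  fix n show "mul f skew_one n = f n" using mul_ee_right[of f 0 n] by (simp add: skew_one_ee)
qed

lemma msum_split0: "mnull c \<Longrightarrow> msum c = c 0 + msum (\<lambda>i. if i = 0 then 0 else (c i::'a))"
proof -
  assume c: "mnull c"
  have m1: "mnull (\<lambda>i. if i = 0 then c 0 else 0)" by (rule mnull_poly[of 1]) (simp add: poly_lt_def)
  have m2: "mnull (\<lambda>i. if i = 0 then 0 else c i)" using c unfolding mnull_def
    by (metis mp_zero)
  have "msum (\<lambda>i. (if i = 0 then c 0 else 0) + (if i = 0 then 0 else c i)) =
     msum (\<lambda>i. if i = 0 then c 0 else 0) + msum (\<lambda>i. if i = 0 then 0 else c i)"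
    by (rule msum_add[OF m1 m2])
  moreover have "msum (\<lambda>i. if i = 0 then c 0 else 0) = c 0" by (subst msum_finite[of 1]) auto
  moreover have "(\<lambda>i. (if i = 0 then c 0 else 0) + (if i = 0 then 0 else c i)) = c" by auto
  ultimately show ?thesis by simp
qed

lemma mul_split0: "mul h g n = h 0 * g n + mul (\<lambda>i. if i = 0 then 0 else h i) g n"
proof -
  have "mul h g n = h 0 * g n + msum (\<lambda>i. if i = 0 then 0 else h i * XP i g n)"
    unfolding mul_eq by (subst msum_split0[OF mnull_mXp]) simp
  also have "(\<lambda>i. if i = 0 then 0 else h i * XP i g n) = (\<lambda>i. (if i = 0 then 0 else h i) * XP i g n)"
    by auto
  finally show ?thesis by (simp add: mul_eq)
qed

lemma mul0_mod: "mul a b 0 - a 0 * b 0 \<in> mid"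
proof -
  have "mul (\<lambda>i. if i = 0 then 0 else a i) b 0 \<in> mpow 1"
    unfolding mul_eq
  proof (intro msum_closed mnull_mXp allI)
    fix i
    show "(if i = 0 then 0 else a i) * XP i b 0 \<in> mpow 1"
    proof (cases "i = 0")
      case False
      then have "XP i b 0 \<in> mpow 1" using Xp_rate[of i b 0] mp_mono by simp
      then show ?thesis using mp_ml by simp
    qed simp
  qed
  then show ?thesis using mul_split0[of a b 0] mid_mp1 by simp
qed

lemma right_inv_const: "unit_r (h 0) \<Longrightarrow> \<exists>g. mul h g = skew_one"
proof -
  assume "unit_r (h 0)"
  then obtain c where c: "h 0 * c = 1" "c * h 0 = 1" unfolding unit_r_def by blast
  define N where "N = (\<lambda>i. if i = 0 then 0 else h i)"
  define \<Phi> where "\<Phi> g = (\<lambda>n. c * (skew_one n - mul N g n))" for g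
  have contr: "wcl (Suc M) (\<Phi> g) (\<Phi> g')" if "wcl M g g'" for M g g'
    unfolding closeD_def
  proof
    fix n
    have a: "\<forall>j. g j - g' j \<in> mpow (0 + (M - j))" using that unfolding closeD_def by simp
    have "N i * XP i (\<lambda>j. g j - g' j) n \<in> mpow (Suc M - n)" for i
    proof (cases "i = 0")
      case False
      have "XP i (\<lambda>j. g j - g' j) n \<in> mpow (0 + (M + i - n))" by (rule Xp_lvl[OF a])
      then have "XP i (\<lambda>j. g j - g' j) n \<in> mpow (Suc M - n)" by (rule mp_mono) (use False in simp)
      then show ?thesis by (rule mp_ml)
    qed (simp add: N_def)
    then have "mul N g n - mul N g' n \<in> mpow (Suc M - n)"
      unfolding mul_diff_right by (intro msum_closed mnull_mXp) auto
    then have "c * (mul N g n - mul N g' n) \<in> mpow (Suc M - n)" by (rule mp_ml)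
    then have "- (c * (mul N g n - mul N g' n)) \<in> mpow (Suc M - n)" by (rule mp_uminus)
    then show "\<Phi> g n - \<Phi> g' n \<in> mpow (Suc M - n)"
      unfolding \<Phi>_def by (simp add: algebra_simps)
  qed
  obtain g where g: "\<Phi> g = g" using fixpt[of "\<lambda>n. n" \<Phi>] contr by blast
  have "mul h g n = skew_one n" for n
  proof -
    have "mul h g n = h 0 * g n + mul N g n" unfolding N_def by (rule mul_split0)
    also have "h 0 * g n = h 0 * c * (skew_one n - mul N g n)"
      by (subst g[symmetric]) (simp add: \<Phi>_def mult.assoc)
    finally show ?thesis using c by simp
  qed
  then show ?thesis by blast
qed

lemma const_unit: "unit_r (h 0) \<Longrightarrow> skew_unit \<sigma> \<delta> h"
proof -
  assume h0: "unit_r (h 0)"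
  obtain g where g: "mul h g = skew_one" using right_inv_const[of h, OF h0] by blast
  obtain c where c: "h 0 * c = 1" "c * h 0 = 1" using h0 unfolding unit_r_def by blast
  have "mul h g 0 - h 0 * g 0 \<in> mid" by (rule mul0_mod)
  then have "1 - h 0 * g 0 \<in> mid" using g by (simp add: skew_one_def)
  then have "unit_r (1 + - (1 - h 0 * g 0))" using unit_add_mid[OF unit_one] mid_uminus by blast
  then have u: "unit_r (h 0 * g 0)" by simp
  have "unit_r (c * (h 0 * g 0))" using unit_mult[OF _ u] c unfolding unit_r_def by blast
  then have "unit_r (g 0)" using c by (simp add: mult.assoc[symmetric])
  then obtain k where k: "mul g k = skew_one" using right_inv_const[of g] by blast
  have "h = mul h (mul g k)" using k mul_one_right by simp
  also have "\<dots> = k" by (simp add: assoc g mul_one_left)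
  finally have "mul g h = skew_one" using k by simp
  then show ?thesis unfolding skew_unit_def using g by blast
qed

lemma unit_const: "skew_unit \<sigma> \<delta> e \<Longrightarrow> unit_r (e 0)"
proof -
  assume "skew_unit \<sigma> \<delta> e"
  then obtain g where g: "mul e g = skew_one" "mul g e = skew_one" unfolding skew_unit_def by blast
  have "unit_r (x 0 * y 0)" if "mul x y = skew_one" for x y
  proof -
    have "mul x y 0 - x 0 * y 0 \<in> mid" by (rule mul0_mod)
    then have "1 - x 0 * y 0 \<in> mid" using that by (simp add: skew_one_def)
    then have "unit_r (1 + - (1 - x 0 * y 0))" using unit_add_mid[OF unit_one] mid_uminus by blast
    then show ?thesis by simp
  qed
  then show ?thesis using unit_two_sided g by blast
qed

lemma su_mult: "skew_unit \<sigma> \<delta> a \<Longrightarrow> skew_unit \<sigma> \<delta> b \<Longrightarrow> skew_unit \<sigma> \<delta> (mul a b)"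
proof -
  assume "skew_unit \<sigma> \<delta> a" "skew_unit \<sigma> \<delta> b"
  then obtain a' b' where a: "mul a a' = skew_one" "mul a' a = skew_one"
    and b: "mul b b' = skew_one" "mul b' b = skew_one" unfolding skew_unit_def by blast
  have "mul (mul a b) (mul b' a') = skew_one"
    by (simp add: assoc[symmetric]) (simp add: assoc b mul_one_left a)
  moreover have "mul (mul b' a') (mul a b) = skew_one"
    by (simp add: assoc[symmetric]) (simp add: assoc a mul_one_left b)
  ultimately show ?thesis unfolding skew_unit_def by blast
qed

end

context wp
begin

lemma mulB_mid: "\<forall>j. B j \<in> mid \<Longrightarrow> mul Y B n \<in> mid"
proof -
  assume B: "\<forall>j. B j \<in> mid"
  have xb: "XP i B n \<in> mpow 1" for i
  proof -
    have "XP i B n \<in> mpow (1 + (0 + i - n))" by (rule Xp_lvl) (use B mid_mp1 in simp)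
    then show ?thesis by (rule mp_mono) simp
  qed
  have "mul Y B n \<in> mpow 1" unfolding mul_eq
    by (intro msum_closed mnull_mXp allI mp_ml xb)
  then show ?thesis using mid_mp1 by simp
qed

lemma low_mid: "\<forall>j<s. f j \<in> mid \<Longrightarrow> i < s \<Longrightarrow> mul u f i \<in> mid"
proof -
  assume f: "\<forall>j<s. f j \<in> mid" and i: "i < s"
  have "XP k f i \<in> mpow 1" for k
    unfolding Xp_xc
  proof (intro mp_sum)
    fix j assume "j \<in> {..i}"
    then have "f j \<in> mpow 1" using f i mid_mp1 by auto
    then have "xc \<sigma> \<delta> k (i - j) (f j) \<in> mpow (1 + (k - (i - j)))" by (rule xc_lvl)
    then show "xc \<sigma> \<delta> k (i - j) (f j) \<in> mpow 1" by (rule mp_mono) simp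
  qed
  then have "mul u f i \<in> mpow 1" unfolding mul_eq
    by (intro msum_closed mnull_mXp allI mp_ml)
  then show ?thesis using mid_mp1 by simp
qed

lemma dist_top: "F s = 1 \<Longrightarrow> (\<forall>i<s. F i \<in> mid) \<Longrightarrow> mul e F s - e 0 \<in> mid"
proof -
  assume F1: "F s = 1" and Fm: "\<forall>i<s. F i \<in> mid"
  define N where "N = (\<lambda>i. if i = 0 then 0 else e i)"
  have xk: "XP k F s \<in> mpow 1" if "k \<noteq> 0" for k
    unfolding Xp_xc
  proof (intro mp_sum)
    fix j assume j: "j \<in> {..s}"
    show "xc \<sigma> \<delta> k (s - j) (F j) \<in> mpow 1"
    proof (cases "j = s")
      case True then show ?thesis using F1 xc_0_1 that by simp
    next
      case False
      then have "F j \<in> mpow 1" using Fm j mid_mp1 by auto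
      then have "xc \<sigma> \<delta> k (s - j) (F j) \<in> mpow (1 + (k - (s - j)))" by (rule xc_lvl)
      then show ?thesis by (rule mp_mono) simp
    qed
  qed
  have "mul N F s \<in> mpow 1" unfolding mul_eq
  proof (intro msum_closed mnull_mXp allI)
    fix k show "N k * XP k F s \<in> mpow 1"
    proof (cases "k = 0")
      case True then show ?thesis by (simp add: N_def)
    next
      case False then show ?thesis using mp_ml[OF xk[OF False], of "e k"] by (simp add: N_def)
    qed
  qed
  moreover have "mul e F s = e 0 * F s + mul N F s" unfolding N_def by (rule mul_split0)
  ultimately show ?thesis using F1 mid_mp1 by simp
qed

lemma weierstrass:
  assumes "finite_red_ord f"
  shows "\<exists>\<epsilon> F. skew_unit \<sigma> \<delta> \<epsilon> \<and> distinguished F \<and> f = mul \<epsilon> F \<and>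
           (\<forall>\<epsilon>' F'. skew_unit \<sigma> \<delta> \<epsilon>' \<and> distinguished F' \<and> f = mul \<epsilon>' F'
              \<longrightarrow> \<epsilon>' = \<epsilon> \<and> F' = F)"
proof -
  define s where "s = (LEAST i. unit_r (f i))"
  have fs: "unit_r (f s)" using assms unfolding finite_red_ord_def s_def by (meson LeastI)
  have flow: "\<forall>j<s. f j \<in> mid" unfolding s_def using not_less_Least not_unit_mid by blast
  define B where "B = trunc s f"
  have Bm: "\<forall>j. B j \<in> mid" using flow mid_zero unfolding B_def trunc_def by auto
  define C where "C = (\<lambda>i. f (i + s))"
  have "skew_unit \<sigma> \<delta> C" by (rule const_unit) (simp add: C_def fs)
  then obtain Ci where Ci: "mul C Ci = skew_one" "mul Ci C = skew_one" unfolding skew_unit_def by blast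
  have fBC: "f = (\<lambda>n. B n + mul C (ee s) n)"
  proof
    fix n show "f n = B n + mul C (ee s) n"
      by (simp add: mul_ee_right B_def trunc_def C_def)
  qed
  have key: "mul u f (i + s) = mul u B (i + s) + mul u C i" for u i
  proof -
    have "mul u f (i + s) = mul u B (i + s) + mul u (mul C (ee s)) (i + s)"
      by (subst fBC) (rule mul_add_right)
    also have "mul u (mul C (ee s)) = mul (mul u C) (ee s)" by (rule assoc)
    finally show ?thesis by (simp add: mul_ee_right)
  qed
  define \<Phi> where "\<Phi> Z = (\<lambda>i. skew_one i - mul (mul Z Ci) B (i + s))" for Z
  have contr: "vcl (Suc k) (\<Phi> Z) (\<Phi> Z')" if "vcl k Z Z'" for k Z Z'
  proof -
    have "vcl (Suc k) (mul (mul Z Ci) B) (mul (mul Z' Ci) B)"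
      by (rule vcl_mul_mid[OF vcl_mul_left[OF that] Bm])
    then have h: "\<forall>n. mul (mul Z Ci) B n - mul (mul Z' Ci) B n \<in> mpow (Suc k - 0)"
      unfolding closeD_def .
    show ?thesis unfolding closeD_def \<Phi>_def
    proof
      fix n
      have "- (mul (mul Z Ci) B (n + s) - mul (mul Z' Ci) B (n + s)) \<in> mpow (Suc k - 0)"
        using h mp_uminus by blast
      then show "skew_one n - mul (mul Z Ci) B (n + s) - (skew_one n - mul (mul Z' Ci) B (n + s))
          \<in> mpow (Suc k - 0)" by (simp add: algebra_simps)
    qed
  qed
  obtain Z where Zfix: "\<Phi> Z = Z" and Zuniq: "\<forall>Z'. \<Phi> Z' = Z' \<longrightarrow> Z' = Z"
    using fixpt[of "\<lambda>_. 0" \<Phi>] contr by blast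
  define u where "u = mul Z Ci"
  have uC: "mul u C = Z" unfolding u_def by (simp add: assoc[symmetric] Ci mul_one_right)
  have Z0: "Z 0 = 1 - mul u B s" using fun_cong[OF Zfix, of 0] unfolding \<Phi>_def u_def skew_one_def by simp
  have "unit_r (1 + - mul u B s)" by (rule unit_add_mid[OF unit_one mid_uminus[OF mulB_mid[OF Bm]]])
  then have "unit_r (Z 0)" using Z0 by simp
  then have Zu: "skew_unit \<sigma> \<delta> Z" by (rule const_unit)
  have "skew_unit \<sigma> \<delta> Ci" unfolding skew_unit_def using Ci by blast
  then have "skew_unit \<sigma> \<delta> u" unfolding u_def using su_mult Zu by blast
  then obtain \<epsilon> where \<epsilon>: "mul u \<epsilon> = skew_one" "mul \<epsilon> u = skew_one" unfolding skew_unit_def by blast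
  define F where "F = mul u f"
  have tauF: "F (i + s) = skew_one i" for i
  proof -
    have "F (i + s) = mul u B (i + s) + Z i" unfolding F_def key uC ..
    also have "Z i = skew_one i - mul u B (i + s)"
      using fun_cong[OF Zfix, of i] unfolding \<Phi>_def u_def by simp
    finally show ?thesis by simp
  qed
  have distF: "distinguished F" unfolding distinguished_def
  proof (intro exI[of _ s] conjI allI impI)
    show "F s = 1" using tauF[of 0] by (simp add: skew_one_def)
    show "F i = 0" if "s < i" for i using tauF[of "i - s"] that by (simp add: skew_one_def)
    show "F i \<in> mid" if "i < s" for i unfolding F_def by (rule low_mid[OF flow that])
  qed
  have eu: "skew_unit \<sigma> \<delta> \<epsilon>" unfolding skew_unit_def using \<epsilon> by blast
  have feF: "f = mul \<epsilon> F" unfolding F_def by (simp add: assoc \<epsilon> mul_one_left)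
  have uniq: "\<epsilon>' = \<epsilon> \<and> F' = F" if h: "skew_unit \<sigma> \<delta> \<epsilon>'" "distinguished F'" "f = mul \<epsilon>' F'" for \<epsilon>' F'
  proof -
    obtain s' where s': "F' s' = 1" "\<forall>i>s'. F' i = 0" "\<forall>i<s'. F' i \<in> mid"
      using h(2) unfolding distinguished_def by blast
    have fl: "\<forall>i<s'. f i \<in> mid" using h(3) low_mid[OF s'(3)] by simp
    have "f s' - \<epsilon>' 0 \<in> mid" using h(3) dist_top[OF s'(1) s'(3)] by simp
    then have "unit_r (\<epsilon>' 0 + (f s' - \<epsilon>' 0))" by (rule unit_add_mid[OF unit_const[OF h(1)]])
    then have "unit_r (f s')" by simp
    then have "s \<le> s'" unfolding s_def by (rule Least_le)
    moreover have "\<not> s < s'" using fl fs unit_not_mid by blast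
    ultimately have ss: "s' = s" by simp
    obtain u' where u': "mul \<epsilon>' u' = skew_one" "mul u' \<epsilon>' = skew_one" using h(1) unfolding skew_unit_def by blast
    have uf: "mul u' f = F'" using h(3) by (simp add: assoc u' mul_one_left)
    define Z' where "Z' = mul u' C"
    have u'Z: "u' = mul Z' Ci" unfolding Z'_def by (simp add: assoc[symmetric] Ci mul_one_right)
    have tF': "F' (i + s) = skew_one i" for i
      using s' ss by (cases i) (simp_all add: skew_one_def)
    have "\<Phi> Z' = Z'"
    proof
      fix i
      have "F' (i + s) = mul u' B (i + s) + Z' i" unfolding uf[symmetric] key Z'_def ..
      then show "\<Phi> Z' i = Z' i" unfolding \<Phi>_def u'Z[symmetric] using tF'[of i] by simp
    qed
    then have "Z' = Z" using Zuniq by blast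
    then have uu: "u' = u" using u'Z u_def by simp
    have FF: "F' = F" using uf uu F_def by simp
    have "\<epsilon>' = mul \<epsilon>' (mul u \<epsilon>)" using \<epsilon> mul_one_right by simp
    also have "\<dots> = \<epsilon>" by (simp only: assoc uu[symmetric] u'(1) mul_one_left)
    finally show ?thesis using FF by simp
  qed
  show ?thesis using eu distF feF uniq by blast
qed

end

theorem mainTheorem6:
  fixes \<sigma> \<delta> :: "'a::ring_1 \<Rightarrow> 'a" and f :: "nat \<Rightarrow> 'a"
  assumes "local_ring TYPE('a)"
    and "madic_separated TYPE('a)"
    and "madic_complete TYPE('a)"
    and "ring_automorphism \<sigma>"
    and "\<sigma> ` mid = mid"
    and "sigma_derivation \<sigma> \<delta>"
    and "range \<delta> \<subseteq> mid"
    and "\<delta> ` mid \<subseteq> mpow 2"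
    and "finite_red_ord f"
  shows "\<exists>\<epsilon> F. skew_unit \<sigma> \<delta> \<epsilon> \<and> distinguished F \<and> f = skew_mult \<sigma> \<delta> \<epsilon> F \<and>
           (\<forall>\<epsilon>' F'. skew_unit \<sigma> \<delta> \<epsilon>' \<and> distinguished F' \<and> f = skew_mult \<sigma> \<delta> \<epsilon>' F'
              \<longrightarrow> \<epsilon>' = \<epsilon> \<and> F' = F)"
proof -
  interpret wp \<sigma> \<delta> using assms(1-8) by unfold_locales
  show ?thesis by (rule weierstrass[OF assms(9)])
qed

end
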